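(* Suppose that $\kappa = \nu^+$, and $\theta$ is a regular infinite cardinal less than $\nu$ such that $d(\theta,\nu) = \nu$. Then $\clubsuit_\kappa^*[NS_\kappa|E^\kappa_\theta]$ holds.
   Context: For cardinals $\tau\leq\mu$ with $\tau\geq1$, $\mu\geq\omega$, $d(\tau,\mu)$ is the least cardinality of an $X\subseteq[\mu]^\tau$ such that every $e\in[\mu]^\tau$ has a subset belonging to $X$. $E^\kappa_\theta$ is the set of limit ordinals below $\kappa$ of cofinality $\theta$; $NS_\kappa|E^\kappa_\theta = \{B\subseteq\kappa : B\cap E^\kappa_\theta \text{ nonstationary}\}$; for an ideal $J$ on $\kappa$, $J^* = \{A : \kappa\setminus A\in J\}$. $acc(\kappa)$ is the set of nonzero limit ordinals below $\kappa$. $\clubsuit_\kappa^*[J]$: there are $s^i_\alpha\subseteq\alpha$ with $\sup s^i_\alpha=\alpha$ for $i<\alpha\in acc(\kappa)$ such that $\{\alpha<\kappa : \exists i<\alpha\,(s^i_\alpha\subseteq A)\}\in J^*$ for every $A\subseteq\kappa$ of size $\kappa$. *)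

theory Defs
  imports Main
begin

text \<open>Ordinals below a cardinal kappa are represented by the field of a
cardinal well-order r (Card_order r); the ordinal order is r, and
underS r a is the set of ordinals strictly below a.\<close>

definition is_limit :: "'k rel \<Rightarrow> 'k \<Rightarrow> bool" where
  "is_limit r a \<longleftrightarrow> a \<in> Field r \<and> underS r a \<noteq> {} \<and>
     (\<forall>b\<in>underS r a. \<exists>c\<in>underS r a. b \<in> underS r c)"

definition acc_set :: "'k rel \<Rightarrow> 'k set" where
  "acc_set r = {a. is_limit r a}"

definition cofinal_in :: "'k rel \<Rightarrow> 'k set \<Rightarrow> 'k \<Rightarrow> bool" where
  "cofinal_in r S a \<longleftrightarrow> S \<subseteq> underS r a \<and> (\<forall>b\<in>underS r a. \<exists>c\<in>S. (b, c) \<in> r)"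

text \<open>cf(alpha) = theta, where theta is the cardinality of the set T\<close>
definition cof_eq :: "'k rel \<Rightarrow> 'k \<Rightarrow> 't set \<Rightarrow> bool" where
  "cof_eq r a T \<longleftrightarrow>
     (\<exists>C. cofinal_in r C a \<and> (card_of C, card_of T) \<in> ordIso) \<and>
     (\<forall>C. cofinal_in r C a \<longrightarrow> (card_of T, card_of C) \<in> ordLeq)"

definition E_cof :: "'k rel \<Rightarrow> 't set \<Rightarrow> 'k set" where
  "E_cof r T = {a. is_limit r a \<and> cof_eq r a T}"

definition club :: "'k rel \<Rightarrow> 'k set \<Rightarrow> bool" where
  "club r C \<longleftrightarrow> C \<subseteq> Field r \<and>
     (\<forall>b\<in>Field r. \<exists>c\<in>C. (b, c) \<in> r \<and> b \<noteq> c) \<and>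
     (\<forall>a. is_limit r a \<and> (\<forall>b\<in>underS r a. \<exists>c\<in>C \<inter> underS r a. (b, c) \<in> r) \<longrightarrow> a \<in> C)"

definition stationary :: "'k rel \<Rightarrow> 'k set \<Rightarrow> bool" where
  "stationary r S \<longleftrightarrow> S \<subseteq> Field r \<and> (\<forall>C. club r C \<longrightarrow> S \<inter> C \<noteq> {})"

definition NS_restr :: "'k rel \<Rightarrow> 't set \<Rightarrow> 'k set set" where
  "NS_restr r T = {B. B \<subseteq> Field r \<and> \<not> stationary r (B \<inter> E_cof r T)}"

definition dual_filter :: "'k rel \<Rightarrow> 'k set set \<Rightarrow> 'k set set" where
  "dual_filter r J = {A. A \<subseteq> Field r \<and> Field r - A \<in> J}"

definition clubsuit_star :: "'k rel \<Rightarrow> 'k set set \<Rightarrow> bool" where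
  "clubsuit_star r J \<longleftrightarrow>
     (\<exists>s :: 'k \<Rightarrow> 'k \<Rightarrow> 'k set.
        (\<forall>a\<in>acc_set r. \<forall>i\<in>underS r a. cofinal_in r (s a i) a) \<and>
        (\<forall>A. A \<subseteq> Field r \<and> (card_of A, r) \<in> ordIso \<longrightarrow>
           {a\<in>acc_set r. \<exists>i\<in>underS r a. s a i \<subseteq> A} \<in> dual_filter r J))"

definition subsets_of_card :: "'n set \<Rightarrow> 't set \<Rightarrow> 'n set set" where
  "subsets_of_card N T = {e. e \<subseteq> N \<and> (card_of e, card_of T) \<in> ordIso}"

definition d_family :: "'t set \<Rightarrow> 'n set \<Rightarrow> 'n set set \<Rightarrow> bool" where
  "d_family T N X \<longleftrightarrow> X \<subseteq> subsets_of_card N T \<and>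
     (\<forall>e\<in>subsets_of_card N T. \<exists>x\<in>X. x \<subseteq> e)"

definition d_equals_nu :: "'t set \<Rightarrow> 'n set \<Rightarrow> bool" where
  "d_equals_nu T N \<longleftrightarrow>
     (\<exists>X. d_family T N X \<and> (card_of X, card_of N) \<in> ordIso) \<and>
     (\<forall>X. d_family T N X \<longrightarrow> (card_of N, card_of X) \<in> ordLeq)"

end

theory Submission
  imports Defs
begin
unbundle cardinal_syntax


lemma wo_facts: assumes "Well_order r"
  shows "\<And>a b c. (a,b)\<in>r \<Longrightarrow> (b,c)\<in>r \<Longrightarrow> (a,c)\<in>r"
   "\<And>a b. (a,b)\<in>r \<Longrightarrow> (b,a)\<in>r \<Longrightarrow> a=b"
   "\<And>a b. a\<in>Field r \<Longrightarrow> b\<in>Field r \<Longrightarrow> (a,b)\<in>r \<or> (b,a)\<in>r"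
   "\<And>a. a\<in>Field r \<Longrightarrow> (a,a)\<in>r"
   "wf (r - Id)"
  using assms unfolding well_order_on_def linear_order_on_def partial_order_on_def preorder_on_def
  apply -
  apply (meson transD)
  apply (meson antisymD)
  apply (metis total_on_def refl_onD)
  apply (meson refl_onD)
  apply blast
  done

lemma uSF: "underS r a \<subseteq> Field r"
  unfolding underS_def by (auto intro: FieldI1)

lemma bound_lemma:
  assumes W: "Card_order r" and reg: "regularCard r" and B: "B \<subseteq> Field r" and c: "|B| <o r"
  shows "\<exists>i\<in>Field r. B \<subseteq> under r i"
proof -
  have Wo: "Well_order r" using W unfolding card_order_on_def by simp
  have "relChain r (under r)" unfolding relChain_def under_def using wo_facts(1)[OF Wo] by blast
  moreover have "B \<subseteq> (\<Union>i\<in>Field r. under r i)" using B wo_facts(4)[OF Wo] unfolding under_def by blast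
  ultimately show ?thesis using regularCard_UNION[OF W reg] c by blast
qed

lemma rec_lemma:
  fixes r :: "'k rel" and T :: "'t set"
  assumes Wo: "Well_order r" and E: "\<alpha> \<in> E_cof r T"
    and cl: "\<forall>b\<in>underS r \<alpha>. \<exists>c\<in>A \<inter> underS r \<alpha>. (b,c)\<in>r"
  shows "\<exists>e. e \<subseteq> A \<inter> underS r \<alpha> \<and> card_of e =o card_of T \<and> (\<forall>\<gamma>\<in>underS r \<alpha>. card_of (e \<inter> underS r \<gamma>) <o |T| )"
proof -
  note tr = wo_facts(1)[OF Wo] and an = wo_facts(2)[OF Wo] and to = wo_facts(3)[OF Wo] and rf = wo_facts(4)[OF Wo]
  from E have lim: "is_limit r \<alpha>" and ce: "cof_eq r \<alpha> T" unfolding E_cof_def by auto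
  from ce obtain C0 where C0: "cofinal_in r C0 \<alpha>" "|C0| =o |T|" and mc: "\<And>C. cofinal_in r C \<alpha> \<Longrightarrow> |T| \<le>o |C|"
    unfolding cof_eq_def by blast
  have "\<forall>c\<in>C0. \<exists>a. a \<in> A \<inter> underS r \<alpha> \<and> (c,a)\<in>r" using C0(1) cl unfolding cofinal_in_def by blast
  then obtain f where f: "\<And>c. c\<in>C0 \<Longrightarrow> f c \<in> A \<inter> underS r \<alpha> \<and> (c, f c)\<in>r" by metis
  define D where "D = f ` C0"
  have DA: "D \<subseteq> A \<inter> underS r \<alpha>" using f D_def by blast
  have Dcof: "\<forall>b\<in>underS r \<alpha>. \<exists>d\<in>D. (b,d)\<in>r"
  proof
    fix b assume "b \<in> underS r \<alpha>"
    then obtain c where "c\<in>C0" "(b,c)\<in>r" using C0(1) unfolding cofinal_in_def by blast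
    then show "\<exists>d\<in>D. (b,d)\<in>r" using f tr D_def by blast
  qed
  from lim obtain b0 where "b0 \<in> underS r \<alpha>" unfolding is_limit_def by blast
  then have Dne: "D \<noteq> {}" using Dcof by blast
  have "|D| \<le>o |C0|" unfolding D_def by (rule card_of_image)
  moreover have "|C0| \<le>o |T|" using C0(2) by (rule ordIso_imp_ordLeq)
  ultimately have dle: "|D| \<le>o |T|" by (rule ordLeq_transitive)
  have "\<exists>g. g ` T = D" using card_of_ordLeq2[OF Dne, of T] dle by (rule iffD2)
  then obtain g where g: "g ` T = D" by blast
  define t where "t = |T|"
  have Wt: "Well_order t" unfolding t_def by (rule card_of_Well_order)
  have Ft: "Field t = T" unfolding t_def by (rule Field_card_of)
  note ttr = wo_facts(1)[OF Wt] and tan = wo_facts(2)[OF Wt] and tto = wo_facts(3)[OF Wt] and twf = wo_facts(5)[OF Wt]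
  define Rec where "Rec = {\<xi>\<in>T. \<forall>\<eta>\<in>underS t \<xi>. (g \<eta>, g \<xi>)\<in>r \<and> g \<eta> \<noteq> g \<xi>}"
  define e where "e = g ` Rec"
  have eD: "e \<subseteq> D" unfolding e_def Rec_def using g by blast
  have DF: "D \<subseteq> Field r" using DA uSF[of r \<alpha>] by (meson Int_subset_iff subset_trans)
  have ecof: "\<forall>b\<in>underS r \<alpha>. \<exists>\<xi>\<in>Rec. (b, g \<xi>)\<in>r"
  proof
    fix b assume b: "b \<in> underS r \<alpha>"
    then obtain d where d: "d\<in>D" "(b,d)\<in>r" using Dcof by blast
    then obtain \<xi> where \<xi>: "\<xi>\<in>T" "g \<xi> = d" using g by blast
    define S where "S = {\<xi>\<in>T. (b, g \<xi>)\<in>r}"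
    have "\<xi> \<in> S" using \<xi> d S_def by simp
    then obtain \<xi>0 where x0: "\<xi>0 \<in> S" and mn: "\<And>y. (y, \<xi>0) \<in> t - Id \<Longrightarrow> y \<notin> S"
      using wfE_min[OF twf] by metis
    have bF: "b \<in> Field r" using b uSF by fast
    have "\<xi>0 \<in> Rec" unfolding Rec_def
    proof (intro CollectI conjI ballI)
      show "\<xi>0 \<in> T" using x0 S_def by simp
      fix \<eta> assume \<eta>: "\<eta> \<in> underS t \<xi>0"
      then have "(\<eta>, \<xi>0) \<in> t - Id" unfolding underS_def by simp
      then have ns: "\<eta> \<notin> S" using mn by blast
      have \<eta>T: "\<eta> \<in> T" using \<eta> Ft uSF[of t \<xi>0] by fast
      then have gF: "g \<eta> \<in> Field r" using g DF by blast
      have nb: "(b, g \<eta>) \<notin> r" using ns \<eta>T S_def by simp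
      then have 1: "(g \<eta>, b) \<in> r" using to[OF gF bF] by blast
      have 2: "g \<eta> \<noteq> b" using nb rf bF by blast
      have 3: "(b, g \<xi>0) \<in> r" using x0 S_def by simp
      show "(g \<eta>, g \<xi>0) \<in> r" using tr[OF 1 3] .
      show "g \<eta> \<noteq> g \<xi>0" using 1 2 3 an by metis
    qed
    then show "\<exists>\<xi>\<in>Rec. (b, g \<xi>)\<in>r" using x0 S_def by blast
  qed
  have ecof2: "cofinal_in r e \<alpha>" unfolding cofinal_in_def
  proof
    show "e \<subseteq> underS r \<alpha>" using eD DA by blast
    show "\<forall>b\<in>underS r \<alpha>. \<exists>c\<in>e. (b,c)\<in>r" using ecof unfolding e_def by blast
  qed
  have "|e| \<le>o |Rec|" unfolding e_def by (rule card_of_image)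
  moreover have "|Rec| \<le>o |T|" by (rule card_of_mono1) (auto simp: Rec_def)
  ultimately have "|e| \<le>o |T|" by (rule ordLeq_transitive)
  moreover have "|T| \<le>o |e|" using mc[OF ecof2] .
  ultimately have eT: "|e| =o |T|" by (simp add: ordIso_iff_ordLeq)
  have bd: "\<forall>\<gamma>\<in>underS r \<alpha>. card_of (e \<inter> underS r \<gamma>) <o |T|"
  proof
    fix \<gamma> assume \<gamma>: "\<gamma> \<in> underS r \<alpha>"
    then obtain \<xi>1 where x1: "\<xi>1 \<in> Rec" "(\<gamma>, g \<xi>1) \<in> r" using ecof by blast
    have sub: "e \<inter> underS r \<gamma> \<subseteq> g ` underS t \<xi>1"
    proof
      fix x assume x: "x \<in> e \<inter> underS r \<gamma>"
      then obtain \<xi> where xi: "\<xi> \<in> Rec" "x = g \<xi>" unfolding e_def by blast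
      have xg: "(g \<xi>, \<gamma>) \<in> r" "g \<xi> \<noteq> \<gamma>" using x xi unfolding underS_def by auto
      have T1: "\<xi> \<in> T" "\<xi>1 \<in> T" using xi x1 Rec_def by auto
      have "\<xi> \<noteq> \<xi>1" using xg x1(2) an by blast
      moreover have "(\<xi>1, \<xi>) \<notin> t"
      proof
        assume "(\<xi>1, \<xi>) \<in> t"
        with \<open>\<xi> \<noteq> \<xi>1\<close> have "\<xi>1 \<in> underS t \<xi>" unfolding underS_def by auto
        then have "(g \<xi>1, g \<xi>) \<in> r" using xi(1) Rec_def by blast
        then have "(\<gamma>, g \<xi>) \<in> r" using tr x1(2) by blast
        then show False using xg an by blast
      qed
      ultimately have "\<xi> \<in> underS t \<xi>1" using tto[of \<xi> \<xi>1] T1 Ft unfolding underS_def by auto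
      then show "x \<in> g ` underS t \<xi>1" using xi by blast
    qed
    have "card_of (e \<inter> underS r \<gamma>) \<le>o |g ` underS t \<xi>1|" using sub card_of_mono1 by blast
    moreover have "|g ` underS t \<xi>1| \<le>o |underS t \<xi>1|" by (rule card_of_image)
    moreover have "|underS t \<xi>1| <o t"
    proof -
      have a: "\<xi>1 \<in> Field t" using x1 Ft Rec_def by auto
      have b: "Card_order t" unfolding t_def by (rule card_of_Card_order)
      show ?thesis by (rule card_of_underS[OF b a])
    qed
    ultimately show "card_of (e \<inter> underS r \<gamma>) <o |T|" unfolding t_def
      by (meson ordLeq_transitive ordLeq_ordLess_trans)
  qed
  show ?thesis using eD DA eT bd by blast
qed



lemma club_lemma:
  fixes r :: "'k rel"
  assumes Cr: "Card_order r" and reg: "regularCard r" and inf: "infinite (Field r)"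
    and natr: "natLeq <o r"
    and AF: "A \<subseteq> Field r" and Ar: "|A| =o r" and a0: "\<alpha>0 \<in> Field r"
  shows "club r {\<alpha>\<in>Field r. \<alpha>0 \<in> underS r \<alpha> \<and> (\<forall>b\<in>underS r \<alpha>. \<exists>c\<in>A \<inter> underS r \<alpha>. (b,c)\<in>r)}"
    (is "club r ?C")
proof -
  have Wo: "Well_order r" using Cr unfolding card_order_on_def by simp
  note tr = wo_facts(1)[OF Wo] and an = wo_facts(2)[OF Wo] and to = wo_facts(3)[OF Wo]
    and rf = wo_facts(4)[OF Wo] and wfr = wo_facts(5)[OF Wo]
  have Fr: "|Field r| =o r" by (rule card_of_Field_ordIso[OF Cr])
  have fin_less: "|X| <o r" if fX: "finite X" for X :: "'k set"
  proof -
    have 1: "|X| <o natLeq" using fX finite_iff_ordLess_natLeq by blast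
    have 2: "natLeq \<le>o |Field r|" using inf infinite_iff_natLeq_ordLeq by blast
    have 3: "|X| <o |Field r|" by (rule ordLess_ordLeq_trans[OF 1 2])
    show ?thesis by (rule ordLess_ordIso_trans[OF 3 Fr])
  qed
  show ?thesis unfolding club_def
  proof (intro conjI ballI allI impI)
    show "?C \<subseteq> Field r" by blast
  next
    fix b assume bF: "b \<in> Field r"
    obtain b' where b': "b' \<in> Field r" "(b,b')\<in>r" "(\<alpha>0,b')\<in>r"
    proof (cases "(b,\<alpha>0) \<in> r")
      case True show ?thesis by (rule that[OF a0 True rf[OF a0]])
    next
      case False then have "(\<alpha>0,b) \<in> r" using to[OF bF a0] by blast
      then show ?thesis using that[OF bF rf[OF bF]] by simp
    qed
    define A2 where "A2 = {x\<in>A. (b',x)\<in>r \<and> b' \<noteq> x}"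
    have AU: "A \<subseteq> under r b' \<union> A2"
    proof
      fix x assume x: "x \<in> A"
      then have xF: "x \<in> Field r" using AF by blast
      show "x \<in> under r b' \<union> A2"
      proof (cases "(x,b') \<in> r")
        case True then show ?thesis unfolding under_def by simp
      next
        case False
        then have "(b',x) \<in> r" using to[OF xF b'(1)] by blast
        moreover have "b' \<noteq> x" using False rf xF by blast
        ultimately show ?thesis using x unfolding A2_def by blast
      qed
    qed
    have A2inf: "infinite A2"
    proof
      assume "finite A2"
      then have l1: "|A2| <o r" by (rule fin_less)
      have l2: "|underS r b'| <o r" by (rule card_of_underS[OF Cr b'(1)])
      have l3: "|{b'}| <o r" by (rule fin_less) simp
      have l4: "|underS r b' \<union> {b'}| <o r" by (rule card_of_Un_ordLess_infinite_Field[OF inf Cr l2 l3])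
      have "under r b' \<subseteq> underS r b' \<union> {b'}" unfolding under_def underS_def by blast
      then have "|under r b'| \<le>o |underS r b' \<union> {b'}|" by (rule card_of_mono1)
      then have l5: "|under r b'| <o r" using l4 by (rule ordLeq_ordLess_trans)
      have l6: "|under r b' \<union> A2| <o r" by (rule card_of_Un_ordLess_infinite_Field[OF inf Cr l5 l1])
      have "|A| \<le>o |under r b' \<union> A2|" using AU by (rule card_of_mono1)
      then have "|A| <o r" using l6 by (rule ordLeq_ordLess_trans)
      then have "\<not> |A| =o r" by (rule not_ordLess_ordIso)
      then show False using Ar by contradiction
    qed
    obtain h :: "nat \<Rightarrow> 'k" where h: "inj h" "range h \<subseteq> A2"
      using infinite_countable_subset[OF A2inf] by blast
    have hinf: "infinite (range h)" using finite_imageD[of h UNIV] h(1) by auto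
    have "|range h| \<le>o |UNIV :: nat set|" by (rule card_of_image)
    moreover have "|UNIV :: nat set| =o natLeq" by (rule card_of_nat)
    ultimately have "|range h| \<le>o natLeq" by (rule ordLeq_ordIso_trans)
    then have hr: "|range h| <o r" using natr by (rule ordLeq_ordLess_trans)
    have hF: "range h \<subseteq> Field r" using h(2) AF unfolding A2_def by blast
    obtain \<gamma> where \<gamma>: "\<gamma>\<in>Field r" "range h \<subseteq> under r \<gamma>"
      using bound_lemma[OF Cr reg hF hr] by blast
    define Q where "Q = (\<lambda>\<delta>. A2 \<inter> under r \<delta>)"
    define S where "S = {\<delta>\<in>Field r. infinite (Q \<delta>)}"
    have "range h \<subseteq> Q \<gamma>" using \<gamma>(2) h(2) unfolding Q_def by blast
    then have "infinite (Q \<gamma>)" using hinf finite_subset by blast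
    then have "\<gamma> \<in> S" using \<gamma>(1) S_def by blast
    then obtain \<alpha> where aS: "\<alpha>\<in>S" and mn: "\<And>y. (y,\<alpha>)\<in>r - Id \<Longrightarrow> y \<notin> S"
      by (rule wfE_min[OF wfr]) blast
    have aS': "\<alpha> \<in> Field r \<and> infinite (Q \<alpha>)" using aS unfolding S_def by (rule CollectD)
    have aF: "\<alpha> \<in> Field r" using aS' by (rule conjunct1)
    have Qa: "infinite (Q \<alpha>)" using aS' by (rule conjunct2)
    have QF: "finite (Q \<beta>)" if \<beta>: "\<beta> \<in> underS r \<alpha>" for \<beta>
    proof -
      have "(\<beta>,\<alpha>) \<in> r - Id" using \<beta> unfolding underS_def by simp
      then have "\<beta> \<notin> S" by (rule mn)
      moreover have "\<beta> \<in> Field r" using \<beta> uSF[of r \<alpha>] by blast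
      ultimately show ?thesis unfolding S_def by simp
    qed
    have key: "\<exists>x\<in>A \<inter> underS r \<alpha>. (\<beta>,x)\<in>r" if \<beta>: "\<beta> \<in> underS r \<alpha>" for \<beta>
    proof -
      have "finite (Q \<beta> \<union> {\<alpha>})" using QF[OF \<beta>] by simp
      then have "infinite (Q \<alpha> - (Q \<beta> \<union> {\<alpha>}))" using Qa Diff_infinite_finite by blast
      then obtain x where x: "x \<in> Q \<alpha>" "x \<notin> Q \<beta>" "x \<noteq> \<alpha>"
        using infinite_imp_nonempty by blast
      have xA: "x \<in> A2" and xa: "(x,\<alpha>) \<in> r" using x(1) unfolding Q_def under_def by auto
      have "(x,\<beta>) \<notin> r" using x(2) xA unfolding Q_def under_def by auto
      moreover have xF: "x \<in> Field r" using xA AF A2_def by blast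
      moreover have bF: "\<beta> \<in> Field r" using \<beta> uSF[of r \<alpha>] by blast
      ultimately have "(\<beta>,x) \<in> r" using to[OF xF bF] by blast
      moreover have "x \<in> A \<inter> underS r \<alpha>" using xA xa x(3) unfolding A2_def underS_def by blast
      ultimately show ?thesis by blast
    qed
    have b'a: "(b',\<alpha>) \<in> r" "b' \<noteq> \<alpha>"
    proof -
      obtain x where x: "x \<in> Q \<alpha>" using Qa infinite_imp_nonempty by blast
      then have x1: "(b',x) \<in> r" "b' \<noteq> x" "(x,\<alpha>) \<in> r" unfolding Q_def A2_def under_def by auto
      show "(b',\<alpha>) \<in> r" using tr[OF x1(1) x1(3)] .
      show "b' \<noteq> \<alpha>"
      proof
        assume "b' = \<alpha>"
        then have "x = b'" using an[OF x1(3)] x1(1) by simp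
        then show False using x1(2) by simp
      qed
    qed
    have "\<alpha> \<in> ?C"
    proof (intro CollectI conjI ballI)
      show "\<alpha> \<in> Field r" by (rule aF)
      have "(\<alpha>0,\<alpha>) \<in> r" using tr[OF b'(3) b'a(1)] .
      moreover have "\<alpha>0 \<noteq> \<alpha>"
      proof
        assume "\<alpha>0 = \<alpha>"
        then have "b' = \<alpha>" using an[OF b'a(1)] b'(3) by simp
        then show False using b'a(2) by simp
      qed
      ultimately show "\<alpha>0 \<in> underS r \<alpha>" unfolding underS_def by simp
      fix \<beta> assume "\<beta> \<in> underS r \<alpha>"
      then show "\<exists>c\<in>A \<inter> underS r \<alpha>. (\<beta>,c)\<in>r" by (rule key)
    qed
    moreover have "(b,\<alpha>) \<in> r" using tr[OF b'(2) b'a(1)] .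
    moreover have "b \<noteq> \<alpha>"
    proof
      assume "b = \<alpha>"
      then have "b' = \<alpha>" using an[OF b'a(1)] b'(2) by simp
      then show False using b'a(2) by simp
    qed
    ultimately show "\<exists>c\<in>?C. (b, c) \<in> r \<and> b \<noteq> c" by blast
  next
    fix a assume H: "is_limit r a \<and> (\<forall>b\<in>underS r a. \<exists>c\<in>?C \<inter> underS r a. (b, c) \<in> r)"
    then have lim: "is_limit r a" and cc: "\<forall>b\<in>underS r a. \<exists>c\<in>?C \<inter> underS r a. (b, c) \<in> r" by auto
    have aF: "a \<in> Field r" using lim unfolding is_limit_def by (rule conjunct1)
    from lim obtain b0 where "b0 \<in> underS r a" unfolding is_limit_def by blast
    then obtain c where c: "c \<in> ?C" "c \<in> underS r a" using cc by blast
    have ca: "(c,a) \<in> r" "c \<noteq> a" using c(2) unfolding underS_def by auto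
    have "(\<alpha>0,c) \<in> r" "\<alpha>0 \<noteq> c" using c(1) unfolding underS_def by auto
    then have a0c: "(\<alpha>0,c) \<in> r" "\<alpha>0 \<noteq> c" by auto
    have a0a: "(\<alpha>0,a) \<in> r" using tr[OF a0c(1) ca(1)] .
    have a0a2: "\<alpha>0 \<noteq> a"
    proof
      assume "\<alpha>0 = a"
      then have "c = a" using an[OF ca(1)] a0c(1) by simp
      then show False using ca(2) by simp
    qed
    show "a \<in> ?C"
    proof (intro CollectI conjI ballI)
      show "a \<in> Field r" by (rule aF)
      show "\<alpha>0 \<in> underS r a" using a0a a0a2 unfolding underS_def by simp
      fix b assume b: "b \<in> underS r a"
      then obtain b' where b': "b' \<in> underS r a" "b \<in> underS r b'" using lim unfolding is_limit_def by blast
      then obtain c where c: "c \<in> ?C" "c \<in> underS r a" "(b',c) \<in> r" using cc by blast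
      have bb': "(b,b') \<in> r" "b \<noteq> b'" using b'(2) unfolding underS_def by auto
      have bc: "(b,c) \<in> r" using tr[OF bb'(1) c(3)] .
      have "b \<noteq> c"
      proof
        assume "b = c"
        then have "b = b'" using an[OF c(3)] bb'(1) by simp
        then show False using bb'(2) by simp
      qed
      with bc have "b \<in> underS r c" unfolding underS_def by simp
      then obtain x where x: "x \<in> A" "x \<in> underS r c" "(b,x) \<in> r" using c(1) by blast
      have xc: "(x,c) \<in> r" "x \<noteq> c" using x(2) unfolding underS_def by auto
      have ca2: "(c,a) \<in> r" "c \<noteq> a" using c(2) unfolding underS_def by auto
      have "(x,a) \<in> r" using tr[OF xc(1) ca2(1)] .
      moreover have "x \<noteq> a"
      proof
        assume "x = a"
        then have "c = a" using an[OF ca2(1)] xc(1) by simp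
        then show False using ca2(2) by simp
      qed
      ultimately have "x \<in> underS r a" unfolding underS_def by simp
      then show "\<exists>c\<in>A \<inter> underS r a. (b,c)\<in>r" using x by blast
    qed
  qed
qed


theorem corollary3p27:
  fixes r :: "'k rel" and N :: "'n set" and T :: "'t set"
  assumes "Card_order r"
    and "(r, cardSuc (card_of N)) \<in> ordIso"
    and "infinite T"
    and "regularCard (card_of T)"
    and "(card_of T, card_of N) \<in> ordLess"
    and "d_equals_nu T N"
  shows "clubsuit_star r (NS_restr r T)"
proof -
  have Cr: "Card_order r" by (rule assms(1))
  have Wo: "Well_order r" using Cr unfolding card_order_on_def by simp
  note tr = wo_facts(1)[OF Wo] and an = wo_facts(2)[OF Wo] and to = wo_facts(3)[OF Wo]
    and rf = wo_facts(4)[OF Wo]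
  have rS: "r =o cardSuc |N|" using assms(2) .
  have CN: "Card_order |N|" by (rule card_of_Card_order)
  have TN: "|T| \<le>o |N|" using assms(5) by (rule ordLess_imp_ordLeq)
  have Ninf: "infinite N" using card_of_ordLeq_infinite[OF TN assms(3)] .
  have Nr: "|N| <o r" using ordLess_ordIso_trans[OF cardSuc_greater[OF CN] ordIso_symmetric[OF rS]] .
  have Fr: "|Field r| =o r" by (rule card_of_Field_ordIso[OF Cr])
  have NF: "|N| \<le>o |Field r|"
    using ordLeq_ordIso_trans[OF ordLess_imp_ordLeq[OF Nr] ordIso_symmetric[OF Fr]] .
  have inf: "infinite (Field r)" using card_of_ordLeq_infinite[OF NF Ninf] .
  have natN: "natLeq \<le>o |N|" using Ninf infinite_iff_natLeq_ordLeq by metis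
  have natr: "natLeq <o r" using ordLeq_ordLess_trans[OF natN Nr] .
  have reg: "regularCard r"
  proof -
    have FN: "\<not> finite (Field |N| )" using Ninf by (simp add: Field_card_of)
    have r1: "regularCard (cardSuc |N| )" by (rule infinite_cardSuc_regularCard[OF FN CN])
    have ci: "Cinfinite (cardSuc |N| )"
    proof (rule Cinfinite_cardSuc)
      show "Cinfinite |N|" unfolding cinfinite_def using FN CN by (simp add: Field_card_of)
    qed
    show ?thesis by (rule regularCard_ordIso[OF ordIso_symmetric[OF rS] ci r1])
  qed
  obtain X where X: "d_family T N X" "|X| =o |N|" using assms(6) unfolding d_equals_nu_def by blast
  define P where "P = (\<lambda>a. |underS r a| =o |N| )"
  define hb where "hb = (\<lambda>a. SOME h. bij_betw h N (underS r a))"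
  define kb where "kb = (\<lambda>a. SOME k. bij_betw k (underS r a) X)"
  define s where "s = (\<lambda>a i. if P a \<and> cofinal_in r (hb a ` kb a i) a then hb a ` kb a i else underS r a)"
  have hb: "bij_betw (hb a) N (underS r a)" if Pa: "P a" for a
  proof -
    have "|N| =o |underS r a|" using Pa unfolding P_def by (rule ordIso_symmetric)
    then have "\<exists>h. bij_betw h N (underS r a)" by (rule iffD2[OF card_of_ordIso])
    then show ?thesis unfolding hb_def by (rule someI_ex)
  qed
  have kb: "bij_betw (kb a) (underS r a) X" if Pa: "P a" for a
  proof -
    have "|underS r a| =o |X|" using ordIso_transitive[OF Pa[unfolded P_def] ordIso_symmetric[OF X(2)]] .
    then have "\<exists>h. bij_betw h (underS r a) X" by (rule iffD2[OF card_of_ordIso])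
    then show ?thesis unfolding kb_def by (rule someI_ex)
  qed
  have uc: "cofinal_in r (underS r a) a" for a
    unfolding cofinal_in_def
  proof (intro conjI ballI subset_refl)
    fix b assume "b \<in> underS r a"
    then have "b \<in> Field r" using uSF[of r a] by blast
    then have "(b,b) \<in> r" by (rule rf)
    then show "\<exists>c\<in>underS r a. (b, c) \<in> r" using \<open>b \<in> underS r a\<close> by blast
  qed
  have part1: "\<forall>a\<in>acc_set r. \<forall>i\<in>underS r a. cofinal_in r (s a i) a"
  proof (intro ballI)
    fix a i
    show "cofinal_in r (s a i) a"
    proof (cases "P a \<and> cofinal_in r (hb a ` kb a i) a")
      case True then show ?thesis unfolding s_def by simp
    next
      case False then show ?thesis unfolding s_def using uc[of a] by simp
    qed
  qed
  have part2: "{a\<in>acc_set r. \<exists>i\<in>underS r a. s a i \<subseteq> A} \<in> dual_filter r (NS_restr r T)"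
    if AF: "A \<subseteq> Field r" and Ar: "|A| =o r" for A
  proof -
    have "\<exists>f. inj_on f N \<and> f ` N \<subseteq> Field r" using NF by (rule iffD2[OF card_of_ordLeq])
    then obtain f where f: "inj_on f N" "f ` N \<subseteq> Field r" by blast
    define B where "B = f ` N"
    have "bij_betw f N B" unfolding B_def bij_betw_def using f(1) by simp
    then have NB: "|N| =o |B|" by (rule card_of_ordIsoI)
    have Br: "|B| <o r" using ordIso_ordLess_trans[OF ordIso_symmetric[OF NB] Nr] .
    have BF: "B \<subseteq> Field r" using f(2) B_def by simp
    obtain \<alpha>0 where a0: "\<alpha>0 \<in> Field r" "B \<subseteq> under r \<alpha>0"
      using bound_lemma[OF Cr reg BF Br] by blast
    have "|B| \<le>o |under r \<alpha>0|" using a0(2) by (rule card_of_mono1)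
    then have Nu: "|N| \<le>o |under r \<alpha>0|" by (rule ordIso_ordLeq_trans[OF NB])
    define C where "C = {\<alpha>\<in>Field r. \<alpha>0 \<in> underS r \<alpha> \<and> (\<forall>b\<in>underS r \<alpha>. \<exists>c\<in>A \<inter> underS r \<alpha>. (b,c)\<in>r)}"
    have club: "club r C" unfolding C_def by (rule club_lemma[OF Cr reg inf natr AF Ar a0(1)])
    have good: "\<exists>i\<in>underS r \<alpha>. s \<alpha> i \<subseteq> A" if aC: "\<alpha> \<in> C" and aE: "\<alpha> \<in> E_cof r T" for \<alpha>
    proof -
      have aC': "\<alpha> \<in> Field r" "\<alpha>0 \<in> underS r \<alpha>" "\<forall>b\<in>underS r \<alpha>. \<exists>c\<in>A \<inter> underS r \<alpha>. (b,c)\<in>r"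
        using aC unfolding C_def by auto
      have a0a: "(\<alpha>0,\<alpha>) \<in> r" "\<alpha>0 \<noteq> \<alpha>" using aC'(2) unfolding underS_def by auto
      have uu: "under r \<alpha>0 \<subseteq> underS r \<alpha>"
      proof
        fix x assume "x \<in> under r \<alpha>0"
        then have x: "(x,\<alpha>0) \<in> r" unfolding under_def by simp
        have "(x,\<alpha>) \<in> r" using tr[OF x a0a(1)] .
        moreover have "x \<noteq> \<alpha>"
        proof
          assume "x = \<alpha>"
          then have "\<alpha>0 = \<alpha>" using an[OF a0a(1)] x by simp
          then show False using a0a(2) by simp
        qed
        ultimately show "x \<in> underS r \<alpha>" unfolding underS_def by simp
      qed
      have Pa: "P \<alpha>"
      proof -
        have "|under r \<alpha>0| \<le>o |underS r \<alpha>|" using uu by (rule card_of_mono1)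
        then have l1: "|N| \<le>o |underS r \<alpha>|" by (rule ordLeq_transitive[OF Nu])
        have "|underS r \<alpha>| <o r" by (rule card_of_underS[OF Cr aC'(1)])
        then have "|underS r \<alpha>| <o cardSuc |N|" using rS by (rule ordLess_ordIso_trans)
        then have l2: "|underS r \<alpha>| \<le>o |N|" by (rule iffD1[OF cardSuc_ordLeq_ordLess[OF CN card_of_Card_order]])
        show ?thesis unfolding P_def using l1 l2 by (simp add: ordIso_iff_ordLeq)
      qed
      obtain e where e: "e \<subseteq> A \<inter> underS r \<alpha>" "card_of e =o card_of T"
        "\<forall>\<gamma>\<in>underS r \<alpha>. card_of (e \<inter> underS r \<gamma>) <o |T|"
        using rec_lemma[OF Wo aE aC'(3)] by blast
      define h where "h = hb \<alpha>"
      have hbij: "bij_betw h N (underS r \<alpha>)" unfolding h_def by (rule hb[OF Pa])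
      define e' where "e' = {n\<in>N. h n \<in> e}"
      have e'N: "e' \<subseteq> N" unfolding e'_def by blast
      have "h ` e' = e"
      proof
        show "h ` e' \<subseteq> e" unfolding e'_def by blast
        show "e \<subseteq> h ` e'"
        proof
          fix y assume y: "y \<in> e"
          then have "y \<in> h ` N" using e(1) hbij unfolding bij_betw_def by blast
          then obtain n where "n \<in> N" "y = h n" by blast
          then show "y \<in> h ` e'" unfolding e'_def using y by blast
        qed
      qed
      moreover have "inj_on h e'" using e'N hbij unfolding bij_betw_def by (meson inj_on_subset)
      ultimately have "bij_betw h e' e" unfolding bij_betw_def by simp
      then have "|e'| =o |e|" by (rule card_of_ordIsoI)
      then have e'T: "|e'| =o |T|" using e(2) by (rule ordIso_transitive)
      have "e' \<in> subsets_of_card N T" unfolding subsets_of_card_def using e'N e'T by simp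
      then obtain x where x: "x \<in> X" "x \<subseteq> e'" using X(1) unfolding d_family_def by blast
      have "x \<in> subsets_of_card N T" using x(1) X(1) unfolding d_family_def by blast
      then have xN: "x \<subseteq> N" and xT: "|x| =o |T|" unfolding subsets_of_card_def by auto
      define y where "y = h ` x"
      have ye: "y \<subseteq> e" unfolding y_def using x(2) e'_def by blast
      have "inj_on h x" using xN hbij unfolding bij_betw_def by (meson inj_on_subset)
      then have "bij_betw h x y" unfolding y_def bij_betw_def by simp
      then have xy: "|x| =o |y|" by (rule card_of_ordIsoI)
      have yT: "|y| =o |T|" by (rule ordIso_transitive[OF ordIso_symmetric[OF xy] xT])
      have ycof: "cofinal_in r y \<alpha>" unfolding cofinal_in_def
      proof (intro conjI ballI)
        show "y \<subseteq> underS r \<alpha>" using ye e(1) by blast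
        fix b assume b: "b \<in> underS r \<alpha>"
        show "\<exists>c\<in>y. (b, c) \<in> r"
        proof (rule ccontr)
          assume nc: "\<not> (\<exists>c\<in>y. (b, c) \<in> r)"
          have bF: "b \<in> Field r" using b uSF[of r \<alpha>] by blast
          have "y \<subseteq> e \<inter> underS r b"
          proof
            fix c assume c: "c \<in> y"
            then have cF: "c \<in> Field r" using ye e(1) uSF[of r \<alpha>] by blast
            have "(b,c) \<notin> r" using nc c by blast
            then have "(c,b) \<in> r" using to[OF cF bF] by blast
            moreover have "c \<noteq> b" using \<open>(b,c) \<notin> r\<close> rf[OF bF] by blast
            ultimately show "c \<in> e \<inter> underS r b" using c ye unfolding underS_def by blast
          qed
          then have "|y| \<le>o |e \<inter> underS r b|" by (rule card_of_mono1)
          moreover have "card_of (e \<inter> underS r b) <o |T|" using e(3) b by blast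
          ultimately have "|y| <o |T|" by (rule ordLeq_ordLess_trans)
          then have "\<not> |y| =o |T|" by (rule not_ordLess_ordIso)
          then show False using yT by contradiction
        qed
      qed
      obtain i where i: "i \<in> underS r \<alpha>" "kb \<alpha> i = x"
        using kb[OF Pa] x(1) unfolding bij_betw_def by blast
      have "s \<alpha> i = y" unfolding s_def using Pa ycof i(2) y_def h_def by simp
      then show ?thesis using i(1) ye e(1) by blast
    qed
    define G where "G = {a\<in>acc_set r. \<exists>i\<in>underS r a. s a i \<subseteq> A}"
    have GF: "G \<subseteq> Field r" unfolding G_def acc_set_def is_limit_def by blast
    have "\<not> stationary r ((Field r - G) \<inter> E_cof r T)"
    proof
      assume "stationary r ((Field r - G) \<inter> E_cof r T)"
      then have "(Field r - G) \<inter> E_cof r T \<inter> C \<noteq> {}" using club unfolding stationary_def by blast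
      then obtain \<alpha> where a: "\<alpha> \<in> Field r" "\<alpha> \<notin> G" "\<alpha> \<in> E_cof r T" "\<alpha> \<in> C" by blast
      have "\<alpha> \<in> acc_set r" using a(3) unfolding E_cof_def acc_set_def by blast
      moreover have "\<exists>i\<in>underS r \<alpha>. s \<alpha> i \<subseteq> A" by (rule good[OF a(4) a(3)])
      ultimately have "\<alpha> \<in> G" unfolding G_def by blast
      then show False using a(2) by contradiction
    qed
    then have "Field r - G \<in> NS_restr r T" unfolding NS_restr_def by blast
    then show ?thesis unfolding dual_filter_def G_def[symmetric] using GF by blast
  qed
  show ?thesis unfolding clubsuit_star_def using part1 part2 by blast
qed
end
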